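(* Let $m\ge1$ and $p_1,\dots,p_m$ be distinct primes, and let $S=\{1\}\cup\{p_1,\dots,p_m\}\cup\{p_ip_j: 1\le i<j\le m\}$, so $|S|=\frac12(m^2+m+2)$. Then $[S]$ is invertible, $i_-([S])=m$ and $i_+([S])=1+\binom m2=\frac12(m^2-m+2)$.
   Context: The LCM matrix $[S]$ of $S=\{x_1,\dots,x_n\}$ has $(i,j)$ entry $\mathrm{lcm}(x_i,x_j)$; $i_+(M)$ and $i_-(M)$ denote the numbers of positive and negative eigenvalues (with multiplicity) of a real symmetric matrix $M$. *)

theory Defs
  imports "Jordan_Normal_Form.Char_Poly" "HOL-Computational_Algebra.Primes"
begin

definition lcm_matrix :: "nat set \<Rightarrow> real mat" where
  "lcm_matrix S = (let xs = sorted_list_of_set S in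
     mat (length xs) (length xs) (\<lambda>(i,j). real (lcm (xs ! i) (xs ! j))))"

definition pos_inertia :: "real mat \<Rightarrow> nat" where
  "pos_inertia M = (\<Sum>x\<in>{x. poly (char_poly M) x = 0 \<and> x > 0}. order x (char_poly M))"

definition neg_inertia :: "real mat \<Rightarrow> nat" where
  "neg_inertia M = (\<Sum>x\<in>{x. poly (char_poly M) x = 0 \<and> x < 0}. order x (char_poly M))"

end

theory Submission
  imports Defs
begin

lemma exists_support_vec:
  fixes R :: "real mat"
  assumes R: "R \<in> carrier_mat n n" and card: "card I + card J > n"
    and I: "I \<subseteq> {..<n}" and J: "J \<subseteq> {..<n}"
  shows "\<exists>u \<in> carrier_vec n. u \<noteq> 0\<^sub>v n \<and> (\<forall>i<n. i \<notin> I \<longrightarrow> u$i = 0)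
           \<and> (\<forall>j<n. j \<notin> J \<longrightarrow> (R *\<^sub>v u)$j = 0)"
proof -
  define ic where "ic = sorted_list_of_set ({..<n} - I)"
  define jc where "jc = sorted_list_of_set ({..<n} - J)"
  define a where "a = length ic"
  define b where "b = length jc"
  have fI: "finite I" using I finite_subset by blast
  have fJ: "finite J" using J finite_subset by blast
  have a: "a = n - card I" unfolding a_def ic_def using I by (simp add: card_Diff_subset fI)
  have b: "b = n - card J" unfolding b_def jc_def using J by (simp add: card_Diff_subset fJ)
  have cI: "card I \<le> n" using card_mono[OF finite_lessThan I] by simp
  have cJ: "card J \<le> n" using card_mono[OF finite_lessThan J] by simp
  have ab: "a + b < n" using a b card cI cJ by linarith
  define M where "M = mat n n (\<lambda>(r,c). if r < a then (if c = ic!r then 1 else 0)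
      else if r < a + b then R $$ (jc!(r-a), c) else (0::real))"
  have M: "M \<in> carrier_mat n n" unfolding M_def by auto
  have n1: "n - 1 < n" using ab by linarith
  have "M = mat\<^sub>r n n (\<lambda>i. if i = n - 1 then 0\<^sub>v n else row M i)"
    by (rule eq_matI, insert ab, auto simp: M_def)
  hence "det M = 0" using det_row_0[OF n1, of "\<lambda>i. row M i"] M by auto
  then obtain u where u: "u \<in> carrier_vec n" "u \<noteq> 0\<^sub>v n" "M *\<^sub>v u = 0\<^sub>v n"
    using det_0_iff_vec_prod_zero_field[OF M] by auto
  have Mu: "(M *\<^sub>v u) $ r = 0" if "r < n" for r using u(3) that by simp
  show ?thesis
  proof (intro bexI conjI allI impI)
    fix i assume i: "i < n" "i \<notin> I"
    hence "i \<in> set ic" unfolding ic_def by auto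
    then obtain r where r: "r < a" "ic ! r = i" unfolding a_def by (auto simp: in_set_conv_nth)
    have "(M *\<^sub>v u) $ r = (\<Sum>c<n. (if c = i then 1 else 0) * u $ c)"
      using r ab u(1) by (auto simp: M_def scalar_prod_def lessThan_atLeast0)
    also have "\<dots> = (\<Sum>c<n. if c = i then u $ c else 0)" by (rule sum.cong) auto
    also have "\<dots> = u $ i" using i by simp
    finally show "u $ i = 0" using Mu[of r] r ab by auto
  next
    fix j assume j: "j < n" "j \<notin> J"
    hence "j \<in> set jc" unfolding jc_def by auto
    then obtain t where t: "t < b" "jc ! t = j" unfolding b_def by (auto simp: in_set_conv_nth)
    have "(M *\<^sub>v u) $ (a + t) = (R *\<^sub>v u) $ j"
      using t ab u(1) R j by (auto simp: M_def scalar_prod_def lessThan_atLeast0)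
    thus "(R *\<^sub>v u) $ j = 0" using Mu[of "a+t"] t ab by auto
  qed (use u in auto)
qed

lemma inertia_ineq:
  fixes R :: "real mat" and a b :: "nat \<Rightarrow> real"
  assumes R: "R \<in> carrier_mat n n"
    and inj: "\<And>u. u \<in> carrier_vec n \<Longrightarrow> R *\<^sub>v u = 0\<^sub>v n \<Longrightarrow> u = 0\<^sub>v n"
    and qf: "\<And>u. u \<in> carrier_vec n \<Longrightarrow> (\<Sum>i<n. a i * (u$i)^2) = (\<Sum>j<n. b j * ((R *\<^sub>v u)$j)^2)"
  shows "card {i. i<n \<and> a i \<ge> 0} + card {j. j<n \<and> b j < 0} \<le> n"
proof (rule ccontr)
  assume "\<not> ?thesis"
  hence c: "card {i. i<n \<and> a i \<ge> 0} + card {j. j<n \<and> b j < 0} > n" by simp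
  obtain u where u: "u \<in> carrier_vec n" "u \<noteq> 0\<^sub>v n"
    and su: "\<And>i. i<n \<Longrightarrow> i \<notin> {i. i<n \<and> a i \<ge> 0} \<Longrightarrow> u$i = 0"
    and sR: "\<And>j. j<n \<Longrightarrow> j \<notin> {j. j<n \<and> b j < 0} \<Longrightarrow> (R *\<^sub>v u)$j = 0"
    using exists_support_vec[OF R c] by blast
  have "(\<Sum>i<n. a i * (u$i)^2) \<ge> 0"
  proof (rule sum_nonneg)
    fix i assume i: "i \<in> {..<n}"
    show "a i * (u$i)^2 \<ge> 0"
    proof (cases "a i \<ge> 0")
      case True thus ?thesis by simp
    next
      case False thus ?thesis using su[of i] i by simp
    qed
  qed
  moreover have "(\<Sum>j<n. b j * ((R *\<^sub>v u)$j)^2) < (\<Sum>j<n. 0)"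
  proof (rule sum_strict_mono_ex1)
    show "\<forall>j\<in>{..<n}. b j * ((R *\<^sub>v u)$j)^2 \<le> 0"
    proof
      fix j assume j: "j \<in> {..<n}"
      show "b j * ((R *\<^sub>v u)$j)^2 \<le> 0"
      proof (cases "b j < 0")
        case True thus ?thesis by (simp add: mult_nonpos_nonneg)
      next
        case False thus ?thesis using sR[of j] j by simp
      qed
    qed
    have "R *\<^sub>v u \<noteq> 0\<^sub>v n" using inj u by blast
    then obtain j where j: "j < n" "(R *\<^sub>v u)$j \<noteq> 0" using R by (auto simp: vec_eq_iff)
    hence "b j < 0" using sR[of j] by auto
    hence "b j * ((R *\<^sub>v u)$j)^2 < 0" using j by (simp add: mult_neg_pos)
    thus "\<exists>j\<in>{..<n}. b j * ((R *\<^sub>v u)$j)^2 < 0" using j by auto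
  qed simp
  ultimately show False using qf[OF u(1)] by simp
qed

lemma card_split_pred: "card {i. i<n \<and> P i} + card {i. i<(n::nat) \<and> \<not> P i} = n"
proof -
  have "card {i. i<n \<and> P i} + card {i. i<n \<and> \<not> P i} = card ({i. i<n \<and> P i} \<union> {i. i<n \<and> \<not> P i})"
    by (rule card_Un_disjoint[symmetric]) auto
  also have "{i. i<n \<and> P i} \<union> {i. i<n \<and> \<not> P i} = {..<n}" by auto
  finally show ?thesis by simp
qed

lemma inertia_eq:
  fixes R :: "real mat" and a b :: "nat \<Rightarrow> real"
  assumes R: "R \<in> carrier_mat n n"
    and inj: "\<And>u. u \<in> carrier_vec n \<Longrightarrow> R *\<^sub>v u = 0\<^sub>v n \<Longrightarrow> u = 0\<^sub>v n"
    and qf: "\<And>u. u \<in> carrier_vec n \<Longrightarrow> (\<Sum>i<n. a i * (u$i)^2) = (\<Sum>j<n. b j * ((R *\<^sub>v u)$j)^2)"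
    and bnz: "\<And>j. j < n \<Longrightarrow> b j \<noteq> 0"
  shows "(\<forall>i<n. a i \<noteq> 0) \<and> card {i. i<n \<and> a i > 0} = card {j. j<n \<and> b j > 0}
     \<and> card {i. i<n \<and> a i < 0} = card {j. j<n \<and> b j < 0}"
proof -
  have h1: "card {i. i<n \<and> a i \<ge> 0} + card {j. j<n \<and> b j < 0} \<le> n"
    by (rule inertia_ineq[OF R inj qf])
  have qf': "(\<Sum>i<n. (- a i) * (u$i)^2) = (\<Sum>j<n. (- b j) * ((R *\<^sub>v u)$j)^2)"
    if "u \<in> carrier_vec n" for u
    using qf[OF that] by (simp add: sum_negf)
  have h2: "card {i. i<n \<and> - a i \<ge> 0} + card {j. j<n \<and> - b j < 0} \<le> n"
    by (rule inertia_ineq[OF R inj qf'])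
  have e1: "{i. i<n \<and> - a i \<ge> 0} = {i. i<n \<and> a i \<le> 0}" by auto
  have e2: "{j. j<n \<and> - b j < 0} = {j. j<n \<and> b j > 0}" by auto
  have s1: "card {i. i<n \<and> a i \<ge> 0} + card {i. i<n \<and> a i < 0} = n"
    using card_split_pred[of n "\<lambda>i. a i \<ge> 0"] by (simp add: not_le)
  have s2: "card {j. j<n \<and> b j > 0} + card {j. j<n \<and> b j < 0} = n"
  proof -
    have "{j. j<n \<and> \<not> b j > 0} = {j. j<n \<and> b j < 0}"
    proof (rule Collect_cong)
      fix j show "(j<n \<and> \<not> b j > 0) = (j<n \<and> b j < 0)" using bnz[of j] by linarith
    qed
    thus ?thesis using card_split_pred[of n "\<lambda>j. b j > 0"] by simp
  qed
  have s3: "card {i. i<n \<and> a i > 0} + card {i. i<n \<and> a i \<le> 0} = n"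
    using card_split_pred[of n "\<lambda>i. a i > 0"] by (simp add: not_less)
  have m1: "card {i. i<n \<and> a i < 0} \<le> card {i. i<n \<and> a i \<le> 0}"
    by (rule card_mono) auto
  have m2: "card {i. i<n \<and> a i > 0} \<le> card {i. i<n \<and> a i \<ge> 0}"
    by (rule card_mono) auto
  note h2' = h2[unfolded e1 e2]
  have c1: "card {i. i<n \<and> a i < 0} = card {i. i<n \<and> a i \<le> 0}"
    using h1 h2' s1 s2 s3 m1 m2 by linarith
  have c2: "card {i. i<n \<and> a i \<ge> 0} = card {j. j<n \<and> b j > 0}"
    using h1 h2' s1 s2 s3 m1 m2 by linarith
  have c3: "card {i. i<n \<and> a i < 0} = card {j. j<n \<and> b j < 0}"
    using h1 h2' s1 s2 s3 m1 m2 by linarith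
  have eq: "{i. i<n \<and> a i < 0} = {i. i<n \<and> a i \<le> 0}"
    by (rule card_subset_eq[OF _ _ c1]) (auto intro: finite_subset[of _ "{..<n}"])
  have nz: "\<forall>i<n. a i \<noteq> 0"
  proof (intro allI impI notI)
    fix i assume "i < n" "a i = 0"
    hence "i \<in> {i. i<n \<and> a i \<le> 0}" by simp
    hence "i \<in> {i. i<n \<and> a i < 0}" by (simp only: eq)
    thus False using \<open>a i = 0\<close> by simp
  qed
  have "{i. i<n \<and> a i > 0} = {i. i<n \<and> a i \<ge> 0}"
  proof (rule Collect_cong)
    fix i show "(i<n \<and> a i > 0) = (i<n \<and> a i \<ge> 0)"
    proof (cases "i < n")
      case True
      with nz have "a i \<noteq> 0" by blast
      thus ?thesis by linarith
    qed simp
  qed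
  with c2 c3 nz show ?thesis by (simp only:)
qed

lemma herm_eigenvalue_real:
  fixes A :: "real mat" and c :: complex
  assumes A: "A \<in> carrier_mat n n" and sym: "\<And>i j. i < n \<Longrightarrow> j < n \<Longrightarrow> A $$ (i,j) = A $$ (j,i)"
    and ev: "eigenvector (map_mat complex_of_real A) v c"
  shows "Im c = 0"
proof -
  let ?Ac = "map_mat complex_of_real A"
  have v: "v \<in> carrier_vec n" and v0: "v \<noteq> 0\<^sub>v n" and Av: "?Ac *\<^sub>v v = c \<cdot>\<^sub>v v"
    using ev A unfolding eigenvector_def by auto
  define N where "N = (\<Sum>i<n. cnj (v$i) * v$i)"
  define s where "s = (\<Sum>i<n. cnj (v$i) * (?Ac *\<^sub>v v)$i)"
  have comp: "(?Ac *\<^sub>v v)$i = (\<Sum>j<n. complex_of_real (A $$ (i,j)) * v$j)" if "i < n" for i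
    using that A v by (simp add: scalar_prod_def lessThan_atLeast0 mult.commute)
  have "s = (\<Sum>i<n. cnj (v$i) * (c * v$i))"
    unfolding s_def by (rule sum.cong, insert Av v, auto)
  also have "\<dots> = c * N" unfolding N_def sum_distrib_left by (rule sum.cong, auto)
  finally have s1: "s = c * N" .
  have s2: "s = (\<Sum>i<n. \<Sum>j<n. cnj (v$i) * complex_of_real (A $$ (i,j)) * v$j)"
    unfolding s_def by (rule sum.cong, simp, simp add: comp sum_distrib_left mult.assoc)
  have "cnj s = (\<Sum>i<n. \<Sum>j<n. v$i * complex_of_real (A $$ (i,j)) * cnj (v$j))"
    unfolding s2 cnj_sum by simp
  also have "\<dots> = (\<Sum>j<n. \<Sum>i<n. v$i * complex_of_real (A $$ (i,j)) * cnj (v$j))"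
    by (rule sum.swap)
  also have "\<dots> = (\<Sum>j<n. \<Sum>i<n. cnj (v$j) * complex_of_real (A $$ (j,i)) * v$i)"
    by (rule sum.cong, simp, rule sum.cong, simp, simp add: sym mult.commute mult.left_commute)
  also have "\<dots> = s" unfolding s2 ..
  finally have cs: "cnj s = s" .
  have Nr: "N = complex_of_real (\<Sum>i<n. (cmod (v$i))^2)"
    unfolding N_def of_real_sum
    by (rule sum.cong, simp) (metis complex_norm_square mult.commute)
  obtain k where k: "k < n" "v$k \<noteq> 0" using v v0 by (auto simp: vec_eq_iff)
  have "(\<Sum>i<n. (cmod (v$i))^2) > 0"
  proof (rule sum_pos2[of _ k])
    show "(cmod (v$k))^2 > 0" using k by simp
  qed (use k in auto)
  hence N0: "N \<noteq> 0" unfolding Nr of_real_eq_0_iff by linarith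
  have "cnj c * N = cnj (c * N)" unfolding Nr by simp
  also have "\<dots> = c * N" using cs s1 by simp
  finally have "cnj c = c" using N0 by simp
  thus "Im c = 0" by (metis Reals_cnj_iff complex_is_Real_iff)
qed

lemma sym_char_poly_real_split:
  fixes A :: "real mat"
  assumes A: "A \<in> carrier_mat n n" and sym: "\<And>i j. i < n \<Longrightarrow> j < n \<Longrightarrow> A $$ (i,j) = A $$ (j,i)"
  shows "\<exists>es. char_poly A = (\<Prod>e\<leftarrow>es. [:-e,1:]) \<and> length es = n"
proof -
  interpret R: map_poly_inj_comm_ring_hom "of_real :: real \<Rightarrow> complex" ..
  let ?Ac = "map_mat complex_of_real A"
  have Ac: "?Ac \<in> carrier_mat n n" using A by simp
  have cp: "char_poly ?Ac = map_poly of_real (char_poly A)"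
    by (rule of_real_hom.char_poly_hom[OF A])
  obtain cs where cs: "char_poly ?Ac = (\<Prod>c\<leftarrow>cs. [:-c,1:])" "length cs = n"
    using char_poly_factorized[OF Ac] by blast
  have real: "c = of_real (Re c)" if c: "c \<in> set cs" for c
  proof -
    have "poly (char_poly ?Ac) c = 0" unfolding cs(1) by (rule linear_poly_root[OF c])
    hence "eigenvalue ?Ac c" using eigenvalue_root_char_poly[OF Ac] by simp
    then obtain v where "eigenvector ?Ac v c" unfolding eigenvalue_def by blast
    from herm_eigenvalue_real[OF A sym this] show ?thesis by (simp add: complex_eq_iff)
  qed
  define es where "es = map Re cs"
  have "map_poly of_real (\<Prod>e\<leftarrow>es. [:-e,1:]) = (\<Prod>e\<leftarrow>es. map_poly complex_of_real [:-e,1:])"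
    by (simp add: R.hom_prod_list o_def)
  also have "\<dots> = (\<Prod>c\<leftarrow>cs. [:-c,1:])"
    unfolding es_def map_map o_def
    by (rule arg_cong[of _ _ prod_list], rule map_cong, simp, subst (3) real, auto)
  also have "\<dots> = map_poly of_real (char_poly A)" using cs cp by simp
  finally have "char_poly A = (\<Prod>e\<leftarrow>es. [:-e,1:])" using R.eq_iff by metis
  thus ?thesis using cs(2) by (intro exI[of _ es]) (simp add: es_def)
qed

lemma delta_sum_l: "i < (n::nat) \<Longrightarrow> (\<Sum>k<n. (if i = k then 1 else 0) * f k) = (f i :: real)"
proof -
  assume i: "i < n"
  have "(\<Sum>k<n. (if i = k then 1 else 0) * f k) = (\<Sum>k<n. if k = i then f k else 0)"
    by (rule sum.cong) auto
  also have "\<dots> = f i" using i by simp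
  finally show ?thesis .
qed

lemma delta_sum_r: "j < (n::nat) \<Longrightarrow> (\<Sum>k<n. f k * (if k = j then 1 else 0)) = (f j :: real)"
proof -
  assume j: "j < n"
  have "(\<Sum>k<n. f k * (if k = j then 1 else 0)) = (\<Sum>k<n. if k = j then f k else 0)"
    by (rule sum.cong) auto
  also have "\<dots> = f j" using j by simp
  finally show ?thesis .
qed

lemma hh_sum:
  fixes w :: "nat \<Rightarrow> real" and n :: nat
  assumes c: "c = (\<Sum>k<n. w k * w k)" "c \<noteq> 0" and ij: "i < n" "j < n"
  shows "(\<Sum>k<n. ((if i = k then 1 else 0) - 2 * w i * w k / c) * ((if k = j then 1 else 0) - 2 * w k * w j / c))
    = (if i = j then 1 else 0)"
proof -
  let ?d = "\<lambda>i k. if i = k then (1::real) else 0"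
  have "(\<Sum>k<n. (?d i k - 2 * w i * w k / c) * (?d k j - 2 * w k * w j / c))
    = (\<Sum>k<n. ?d i k * ?d k j) - (\<Sum>k<n. ?d i k * (2 * w k * w j / c))
      - (\<Sum>k<n. (2 * w i * w k / c) * ?d k j) + (\<Sum>k<n. (2 * w i * w k / c) * (2 * w k * w j / c))"
    by (simp add: sum.distrib sum_subtractf algebra_simps)
  also have "(\<Sum>k<n. ?d i k * ?d k j) = ?d i j" using delta_sum_l[OF ij(1), of "\<lambda>k. ?d k j"] by simp
  also have "(\<Sum>k<n. ?d i k * (2 * w k * w j / c)) = 2 * w i * w j / c"
    using delta_sum_l[OF ij(1), of "\<lambda>k. 2 * w k * w j / c"] by simp
  also have "(\<Sum>k<n. (2 * w i * w k / c) * ?d k j) = 2 * w i * w j / c"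
    using delta_sum_r[OF ij(2), of "\<lambda>k. 2 * w i * w k / c"] by simp
  also have "(\<Sum>k<n. (2 * w i * w k / c) * (2 * w k * w j / c)) = (4 * w i * w j / (c * c)) * (\<Sum>k<n. w k * w k)"
    unfolding sum_distrib_left by (rule sum.cong) (auto simp: field_simps)
  also have "\<dots> = 4 * w i * w j / c" using c by (simp add: field_simps)
  finally show ?thesis by simp
qed

lemma householder:
  fixes u :: "real vec"
  assumes u: "u \<in> carrier_vec n" "u \<bullet> u = 1" and n: "0 < n"
  shows "\<exists>H \<in> carrier_mat n n. transpose_mat H = H \<and> H * H = 1\<^sub>m n \<and> col H 0 = u"
proof -
  define w where "w = (\<lambda>k. u $ k - (if k = 0 then 1 else 0))"
  define c where "c = (\<Sum>k<n. w k * w k)"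
  have uu: "(\<Sum>k<n. u$k * u$k) = 1" using u by (simp add: scalar_prod_def lessThan_atLeast0)
  have c2: "c = 2 - 2 * u$0"
  proof -
    have "c = (\<Sum>k<n. u$k * u$k) - (\<Sum>k<n. (if 0 = k then 1 else 0) * (2 * u$k)) + (\<Sum>k<n. (if k = 0 then 1 else 0))"
      unfolding c_def sum_subtractf[symmetric] sum.distrib[symmetric]
      by (rule sum.cong) (auto simp: w_def algebra_simps)
    also have "(\<Sum>k<n. (if 0 = k then 1 else 0) * (2 * u$k)) = 2 * u$0"
      by (rule delta_sum_l[OF n])
    also have "(\<Sum>k<n. (if k = 0 then 1 else (0::real))) = 1" using n by simp
    finally show ?thesis using uu by simp
  qed
  show ?thesis
  proof (cases "c = 0")
    case True
    have "u$0 = 1" using True c2 by simp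
    have "w k = 0" if k: "k < n" for k
    proof (rule ccontr)
      assume "w k \<noteq> 0"
      hence pos: "0 < w k * w k" using not_real_square_gt_zero[of "w k"] by blast
      have "c > 0" unfolding c_def
        by (rule sum_pos2[of _ k]) (use k pos in auto)
      thus False using True by simp
    qed
    hence uk: "u$k = (if k = 0 then 1 else 0)" if "k < n" for k
      using that unfolding w_def by (simp add: algebra_simps)
    have "u = unit_vec n 0"
    proof (rule eq_vecI)
      fix i assume "i < dim_vec (unit_vec n 0)"
      hence "i < n" by simp
      thus "u $ i = unit_vec n 0 $ i" using uk[of i] by (simp add: unit_vec_def)
    qed (use u in simp)
    hence "col (1\<^sub>m n) 0 = u" using n by simp
    thus ?thesis by (intro bexI[of _ "1\<^sub>m n"]) simp_all
  next
    case False
    define H where "H = mat n n (\<lambda>(i,j). (if i = j then 1 else 0) - 2 * w i * w j / c)"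
    have H: "H \<in> carrier_mat n n" unfolding H_def by simp
    have "transpose_mat H = H" by (rule eq_matI) (auto simp: H_def mult.commute)
    moreover have "H * H = 1\<^sub>m n"
    proof (rule eq_matI)
      fix i j assume ij: "i < dim_row (1\<^sub>m n)" "j < dim_col (1\<^sub>m n)"
      hence ij': "i < n" "j < n" by auto
      have "(H * H) $$ (i,j) = (\<Sum>k<n. ((if i = k then 1 else 0) - 2 * w i * w k / c) * ((if k = j then 1 else 0) - 2 * w k * w j / c))"
        using ij' by (simp add: H_def scalar_prod_def lessThan_atLeast0)
      also have "\<dots> = (if i = j then 1 else 0)" by (rule hh_sum[OF c_def False ij'])
      finally show "(H * H) $$ (i,j) = 1\<^sub>m n $$ (i,j)" using ij' by simp
    qed (use H in auto)
    moreover have "col H 0 = u"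
    proof (rule eq_vecI)
      fix i assume "i < dim_vec u"
      hence i: "i < n" using u by simp
      have w0: "w 0 = u$0 - 1" unfolding w_def by simp
      have "1 - u$0 \<noteq> 0" using False c2 by simp
      hence "2 * w 0 / c = -1" using w0 c2 by (simp add: field_simps)
      hence m: "2 * w i * w 0 / c = - w i" by (metis mult.commute mult.left_commute mult_minus1_right times_divide_eq_right)
      have "col H 0 $ i = H $$ (i, 0)" using i n H by simp
      also have "\<dots> = (if i = 0 then 1 else 0) - 2 * w i * w 0 / c" using i n unfolding H_def by simp
      also have "\<dots> = (if i = 0 then 1 else 0) + w i" unfolding m by simp
      also have "\<dots> = u$i" unfolding w_def by simp
      finally show "col H 0 $ i = u $ i" .
    qed (use H u in auto)
    ultimately show ?thesis using H by blast
  qed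
qed

definition diagm :: "real list \<Rightarrow> real mat" where
  "diagm es = mat (length es) (length es) (\<lambda>(i,j). if i = j then es ! i else 0)"

lemma real_sprod_pos:
  fixes v :: "real vec"
  assumes v: "v \<in> carrier_vec n" "v \<noteq> 0\<^sub>v n"
  shows "v \<bullet> v > 0"
proof -
  obtain k where k: "k < n" "v$k \<noteq> 0" using v by (auto simp: vec_eq_iff)
  have pos: "0 < v$k * v$k" using k(2) not_real_square_gt_zero[of "v$k"] by blast
  have "v \<bullet> v = (\<Sum>i<n. v$i * v$i)" using v by (simp add: scalar_prod_def lessThan_atLeast0)
  also have "\<dots> > 0" by (rule sum_pos2[of _ k]) (use k pos in auto)
  finally show ?thesis .
qed

lemma unit_eigenvector:
  fixes A :: "real mat"
  assumes A: "A \<in> carrier_mat n n" and ev: "eigenvalue A e"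
  shows "\<exists>u \<in> carrier_vec n. u \<bullet> u = 1 \<and> A *\<^sub>v u = e \<cdot>\<^sub>v u"
proof -
  obtain v where v: "eigenvector A v e" using ev unfolding eigenvalue_def by blast
  hence v1: "v \<in> carrier_vec n" and v0: "v \<noteq> 0\<^sub>v n" and Av: "A *\<^sub>v v = e \<cdot>\<^sub>v v"
    using A unfolding eigenvector_def by auto
  define a where "a = 1 / sqrt (v \<bullet> v)"
  have vv: "v \<bullet> v > 0" by (rule real_sprod_pos[OF v1 v0])
  have "(a \<cdot>\<^sub>v v) \<bullet> (a \<cdot>\<^sub>v v) = a * a * (v \<bullet> v)" using v1 by simp
  also have "\<dots> = 1" using vv unfolding a_def by (simp add: field_simps)
  finally have 1: "(a \<cdot>\<^sub>v v) \<bullet> (a \<cdot>\<^sub>v v) = 1" .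
  have "A *\<^sub>v (a \<cdot>\<^sub>v v) = a \<cdot>\<^sub>v (e \<cdot>\<^sub>v v)" using mult_mat_vec[OF A v1] Av by simp
  also have "\<dots> = e \<cdot>\<^sub>v (a \<cdot>\<^sub>v v)" by (simp add: smult_smult_assoc mult.commute)
  finally show ?thesis using 1 v1 by (intro bexI[of _ "a \<cdot>\<^sub>v v"]) auto
qed

lemma spectral:
  fixes A :: "real mat"
  assumes "A \<in> carrier_mat n n" "\<And>i j. i < n \<Longrightarrow> j < n \<Longrightarrow> A $$ (i,j) = A $$ (j,i)"
    "char_poly A = (\<Prod>e\<leftarrow>es. [:-e,1:])"
  shows "\<exists>P \<in> carrier_mat n n. transpose_mat P * P = 1\<^sub>m n \<and> transpose_mat P * A * P = diagm es"
  using assms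
proof (induction es arbitrary: n A)
  case Nil
  hence n: "n = 0" using degree_monic_char_poly[OF Nil.prems(1)] by simp
  show ?case
  proof (intro bexI[of _ "1\<^sub>m n"] conjI)
    show "transpose_mat (1\<^sub>m n) * A * 1\<^sub>m n = diagm []"
      by (rule eq_matI) (use Nil.prems(1) n in \<open>auto simp: diagm_def\<close>)
  qed simp_all
next
  case (Cons e es n A)
  note A = Cons.prems(1) and sym = Cons.prems(2) and cp = Cons.prems(3)
  have deg: "n = Suc (length es)"
    using degree_monic_char_poly[OF A] cp degree_linear_factors[of "\<lambda>a. - a" "e # es"] by simp
  define n1 where "n1 = n - 1"
  have nn: "n = 1 + n1" unfolding n1_def using deg by simp
  have n0: "0 < n" using deg by simp
  have "eigenvalue A e" unfolding eigenvalue_root_char_poly[OF A] cp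
    by (rule linear_poly_root) simp
  from unit_eigenvector[OF A this] obtain u where
    u: "u \<in> carrier_vec n" "u \<bullet> u = 1" "A *\<^sub>v u = e \<cdot>\<^sub>v u" by blast
  from householder[OF u(1,2) n0] obtain H where
    H: "H \<in> carrier_mat n n" and HT: "transpose_mat H = H" and HH: "H * H = 1\<^sub>m n"
    and Hc: "col H 0 = u" by blast
  define A' where "A' = H * A * H"
  have A': "A' \<in> carrier_mat n n" unfolding A'_def using H A by simp
  have AT: "transpose_mat A = A" by (rule eq_matI) (use A sym in auto)
  have A'T: "transpose_mat A' = A'"
    unfolding A'_def
    using transpose_mult[OF mult_carrier_mat[OF H A] H] transpose_mult[OF H A] AT HT
      assoc_mult_mat[OF H A H] by simp
  have sym': "A' $$ (i,j) = A' $$ (j,i)" if "i < n" "j < n" for i j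
  proof -
    have "A' $$ (i,j) = transpose_mat A' $$ (i,j)" using A'T by simp
    also have "\<dots> = A' $$ (j,i)" using that A' by simp
    finally show ?thesis .
  qed
  have Hu: "H *\<^sub>v u = unit_vec n 0"
  proof -
    have "H *\<^sub>v u = col (H * H) 0" using col_mult2[OF H H n0] Hc by simp
    also have "\<dots> = unit_vec n 0" using HH n0 by simp
    finally show ?thesis .
  qed
  have colA': "col A' 0 = e \<cdot>\<^sub>v unit_vec n 0"
  proof -
    have "col A' 0 = (H * A) *\<^sub>v col H 0" unfolding A'_def
      by (rule col_mult2[OF mult_carrier_mat[OF H A] H n0])
    also have "\<dots> = H *\<^sub>v (A *\<^sub>v u)" using H A u(1) Hc by simp
    also have "\<dots> = e \<cdot>\<^sub>v (H *\<^sub>v u)" using u(3) mult_mat_vec[OF H u(1)] by simp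
    finally show ?thesis using Hu by simp
  qed
  have c0: "A' $$ (i,0) = (if i = 0 then e else 0)" if "i < n" for i
  proof -
    have "A' $$ (i,0) = col A' 0 $ i" using that A' n0 by simp
    also have "\<dots> = (if i = 0 then e else 0)" unfolding colA' using that by simp
    finally show ?thesis .
  qed
  define A3 where "A3 = mat n1 n1 (\<lambda>(i,j). A' $$ (Suc i, Suc j))"
  have A3: "A3 \<in> carrier_mat n1 n1" unfolding A3_def by simp
  have blk: "A' = four_block_mat (mat 1 1 (\<lambda>_. e)) (0\<^sub>m 1 n1) (0\<^sub>m n1 1) A3"
  proof (rule eq_matI)
    fix i j assume ij: "i < dim_row (four_block_mat (mat 1 1 (\<lambda>_. e)) (0\<^sub>m 1 n1) (0\<^sub>m n1 1) A3)"
      "j < dim_col (four_block_mat (mat 1 1 (\<lambda>_. e)) (0\<^sub>m 1 n1) (0\<^sub>m n1 1) A3)"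
    hence i: "i < n" and j: "j < n" using A3 nn by auto
    show "A' $$ (i,j) = four_block_mat (mat 1 1 (\<lambda>_. e)) (0\<^sub>m 1 n1) (0\<^sub>m n1 1) A3 $$ (i,j)"
    proof (cases "i = 0")
      case True
      thus ?thesis using c0[OF j] sym'[OF i j] ij A3 by (cases "j = 0") auto
    next
      case False
      thus ?thesis using c0[OF i] ij A3 i j nn unfolding A3_def by (cases "j = 0") auto
    qed
  qed (use A' A3 nn in auto)
  have "similar_mat_wit A' A H H" unfolding similar_mat_wit_def Let_def
    using A' A H HH A'_def by auto
  hence "char_poly A' = char_poly A" using char_poly_similar unfolding similar_mat_def by blast
  moreover have "char_poly A' = [:-e,1:] * char_poly A3"
  proof -
    have "char_poly A' = char_poly (mat 1 1 (\<lambda>_. e)) * char_poly A3"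
      unfolding blk by (rule char_poly_four_block_zeros_col) (use A3 in auto)
    also have "char_poly (mat 1 1 (\<lambda>_. e)) = [:-e,1:]"
      by (simp add: char_poly_defs det_def sign_def)
    finally show ?thesis .
  qed
  ultimately have "[:-e,1:] * char_poly A3 = [:-e,1:] * (\<Prod>e\<leftarrow>es. [:-e,1:])" using cp by simp
  hence cp3: "char_poly A3 = (\<Prod>e\<leftarrow>es. [:-e,1:])"
    by (metis mult_cancel_left pCons_eq_0_iff zero_neq_one)
  have sym3: "A3 $$ (i,j) = A3 $$ (j,i)" if "i < n1" "j < n1" for i j
    using that sym'[of "Suc i" "Suc j"] nn unfolding A3_def by simp
  from Cons.IH[OF A3 sym3 cp3] obtain P3 where P3: "P3 \<in> carrier_mat n1 n1"
    and P3o: "transpose_mat P3 * P3 = 1\<^sub>m n1" and P3d: "transpose_mat P3 * A3 * P3 = diagm es" by blast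
  define B where "B = four_block_mat (1\<^sub>m 1) (0\<^sub>m 1 n1) (0\<^sub>m n1 1) P3"
  have B: "B \<in> carrier_mat n n" unfolding B_def nn using P3 by auto
  have BT: "transpose_mat B = four_block_mat (1\<^sub>m 1) (0\<^sub>m 1 n1) (0\<^sub>m n1 1) (transpose_mat P3)"
    unfolding B_def by (subst transpose_four_block_mat[of _ 1 1 _ n1 _ n1]) (use P3 in auto)
  have P3T: "transpose_mat P3 \<in> carrier_mat n1 n1" using P3 by simp
  have BTc: "transpose_mat B \<in> carrier_mat n n" using B by simp
  define P where "P = H * B"
  have P: "P \<in> carrier_mat n n" unfolding P_def using H B by simp
  have PT: "transpose_mat P = transpose_mat B * H" unfolding P_def using transpose_mult[OF H B] HT by simp
  have "transpose_mat P * P = transpose_mat B * B"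
  proof -
    have "transpose_mat P * P = (transpose_mat B * H) * (H * B)"
      using PT by (simp add: P_def)
    also have "\<dots> = transpose_mat B * (H * (H * B))"
      by (rule assoc_mult_mat[OF BTc H mult_carrier_mat[OF H B]])
    also have "H * (H * B) = B" using assoc_mult_mat[OF H H B, symmetric] HH B by simp
    finally show ?thesis .
  qed
  also have "\<dots> = 1\<^sub>m n"
  proof -
    have "transpose_mat B * B = four_block_mat (1\<^sub>m 1 * 1\<^sub>m 1 + 0\<^sub>m 1 n1 * 0\<^sub>m n1 1) (1\<^sub>m 1 * 0\<^sub>m 1 n1 + 0\<^sub>m 1 n1 * P3)
      (0\<^sub>m n1 1 * 1\<^sub>m 1 + transpose_mat P3 * 0\<^sub>m n1 1) (0\<^sub>m n1 1 * 0\<^sub>m 1 n1 + transpose_mat P3 * P3)"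
      unfolding BT unfolding B_def by (rule mult_four_block_mat) (use P3 P3T in auto)
    also have "\<dots> = four_block_mat (1\<^sub>m 1) (0\<^sub>m 1 n1) (0\<^sub>m n1 1) (1\<^sub>m n1)"
      using P3 P3T P3o by simp
    also have "\<dots> = 1\<^sub>m n" using nn by simp
    finally show ?thesis .
  qed
  finally have Po: "transpose_mat P * P = 1\<^sub>m n" .
  have "transpose_mat P * A * P = transpose_mat B * A' * B"
  proof -
    have "transpose_mat P * A * P = transpose_mat B * (H * A * H) * B"
      using PT BTc H B A by (simp add: P_def assoc_mult_mat[of _ n n _ n _ n])
    thus ?thesis unfolding A'_def .
  qed
  also have "\<dots> = four_block_mat (mat 1 1 (\<lambda>_. e)) (0\<^sub>m 1 n1) (0\<^sub>m n1 1) (transpose_mat P3 * A3 * P3)"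
  proof -
    have "transpose_mat B * A' = four_block_mat (1\<^sub>m 1 * mat 1 1 (\<lambda>_. e) + 0\<^sub>m 1 n1 * 0\<^sub>m n1 1) (1\<^sub>m 1 * 0\<^sub>m 1 n1 + 0\<^sub>m 1 n1 * A3)
      (0\<^sub>m n1 1 * mat 1 1 (\<lambda>_. e) + transpose_mat P3 * 0\<^sub>m n1 1) (0\<^sub>m n1 1 * 0\<^sub>m 1 n1 + transpose_mat P3 * A3)"
      unfolding BT by (subst blk, rule mult_four_block_mat) (use A3 P3T in auto)
    also have "\<dots> = four_block_mat (mat 1 1 (\<lambda>_. e)) (0\<^sub>m 1 n1) (0\<^sub>m n1 1) (transpose_mat P3 * A3)"
      using A3 P3T by simp
    finally have 1: "transpose_mat B * A' = \<dots>" .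
    have "four_block_mat (mat 1 1 (\<lambda>_. e)) (0\<^sub>m 1 n1) (0\<^sub>m n1 1) (transpose_mat P3 * A3) * B
      = four_block_mat (mat 1 1 (\<lambda>_. e) * 1\<^sub>m 1 + 0\<^sub>m 1 n1 * 0\<^sub>m n1 1) (mat 1 1 (\<lambda>_. e) * 0\<^sub>m 1 n1 + 0\<^sub>m 1 n1 * P3)
      (0\<^sub>m n1 1 * 1\<^sub>m 1 + (transpose_mat P3 * A3) * 0\<^sub>m n1 1) (0\<^sub>m n1 1 * 0\<^sub>m 1 n1 + (transpose_mat P3 * A3) * P3)"
      unfolding B_def by (rule mult_four_block_mat) (use A3 P3T P3 in auto)
    also have "\<dots> = four_block_mat (mat 1 1 (\<lambda>_. e)) (0\<^sub>m 1 n1) (0\<^sub>m n1 1) (transpose_mat P3 * A3 * P3)"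
      using A3 P3T P3 by simp
    finally show ?thesis unfolding 1 .
  qed
  also have "\<dots> = diagm (e # es)"
  proof -
    have len: "length es = n1" using deg nn by simp
    show ?thesis unfolding P3d
      by (rule eq_matI) (auto simp: diagm_def len nth_Cons' nn)
  qed
  finally show ?case using P Po by blast
qed

lemma order_prod_linear: "order x (\<Prod>e\<leftarrow>es. [:-e,1:]) = count_list es (x::real)"
proof (induction es)
  case Nil thus ?case by (simp add: order_0I)
next
  case (Cons e es)
  have nz: "(\<Prod>e\<leftarrow>es. [:-e,1:]) \<noteq> (0 :: real poly)"
    by (auto simp: prod_list_zero_iff)
  have nz2: "[:-e,1:] * (\<Prod>e\<leftarrow>es. [:-e,1:]) \<noteq> (0 :: real poly)"
    using nz by (metis mult_eq_0_iff pCons_eq_0_iff one_neq_zero)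
  have "order x ([:-e,1:] * (\<Prod>e\<leftarrow>es. [:-e,1:])) = order x [:-e,1:] + order x (\<Prod>e\<leftarrow>es. [:-e,1:])"
    by (rule order_mult[OF nz2])
  hence "order x (\<Prod>e\<leftarrow>e # es. [:-e,1:]) = order x [:-e,1:] + order x (\<Prod>e\<leftarrow>es. [:-e,1:])"
    by (simp only: prod_list.Cons list.map)
  thus ?case using Cons by (simp add: order_linear')
qed

lemma roots_prod_linear: "poly (\<Prod>e\<leftarrow>es. [:-e,1:]) x = 0 \<longleftrightarrow> (x::real) \<in> set es"
  by (induction es) auto

lemma count_list_filter: "P x \<Longrightarrow> count_list (filter P xs) x = count_list xs x"
  by (induction xs) auto

lemma sum_count_filter:
  "(\<Sum>x\<in>{x. x \<in> set es \<and> P x}. count_list es x) = length (filter P es)"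
proof -
  have "(\<Sum>x\<in>{x. x \<in> set es \<and> P x}. count_list es x) = (\<Sum>x\<in>{x. x \<in> set es \<and> P x}. count_list (filter P es) x)"
    by (rule sum.cong) (auto simp: count_list_filter)
  also have "\<dots> = length (filter P es)" by (rule sum_count_set) auto
  finally show ?thesis .
qed

lemma inertia_prod_linear:
  assumes "char_poly M = (\<Prod>e\<leftarrow>es. [:-e,1:])"
  shows "pos_inertia M = card {i. i < length es \<and> es ! i > 0}"
    and "neg_inertia M = card {i. i < length es \<and> es ! i < 0}"
proof -
  have "pos_inertia M = (\<Sum>x\<in>{x. x \<in> set es \<and> x > 0}. count_list es x)"
    unfolding pos_inertia_def assms roots_prod_linear order_prod_linear by simp
  thus "pos_inertia M = card {i. i < length es \<and> es ! i > 0}"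
    by (simp add: sum_count_filter length_filter_conv_card)
  have "neg_inertia M = (\<Sum>x\<in>{x. x \<in> set es \<and> x < 0}. count_list es x)"
    unfolding neg_inertia_def assms roots_prod_linear order_prod_linear by simp
  thus "neg_inertia M = card {i. i < length es \<and> es ! i < 0}"
    by (simp add: sum_count_filter length_filter_conv_card)
qed

lemma sym_inertia:
  fixes A R :: "real mat" and b :: "nat \<Rightarrow> real"
  assumes A: "A \<in> carrier_mat n n" and sym: "\<And>i j. i < n \<Longrightarrow> j < n \<Longrightarrow> A $$ (i,j) = A $$ (j,i)"
    and R: "R \<in> carrier_mat n n"
    and injR: "\<And>u. u \<in> carrier_vec n \<Longrightarrow> R *\<^sub>v u = 0\<^sub>v n \<Longrightarrow> u = 0\<^sub>v n"
    and qA: "\<And>y. y \<in> carrier_vec n \<Longrightarrow> y \<bullet> (A *\<^sub>v y) = (\<Sum>j<n. b j * ((R *\<^sub>v y)$j)^2)"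
    and bnz: "\<And>j. j < n \<Longrightarrow> b j \<noteq> 0"
  shows "invertible_mat A \<and> pos_inertia A = card {j. j<n \<and> b j > 0} \<and> neg_inertia A = card {j. j<n \<and> b j < 0}"
proof -
  obtain es where cp: "char_poly A = (\<Prod>e\<leftarrow>es. [:-e,1:])" and len: "length es = n"
    using sym_char_poly_real_split[OF A sym] by blast
  obtain P where P: "P \<in> carrier_mat n n" and Po: "transpose_mat P * P = 1\<^sub>m n"
    and Pd: "transpose_mat P * A * P = diagm es" using spectral[OF A sym cp] by blast
  have PT: "transpose_mat P \<in> carrier_mat n n" using P by simp
  have RP: "R * P \<in> carrier_mat n n" using R P by simp
  have injRP: "w = 0\<^sub>v n" if w: "w \<in> carrier_vec n" "(R * P) *\<^sub>v w = 0\<^sub>v n" for w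
  proof -
    have "R *\<^sub>v (P *\<^sub>v w) = 0\<^sub>v n" using w R P by simp
    hence Pw: "P *\<^sub>v w = 0\<^sub>v n" using injR P w by simp
    have "w = (transpose_mat P * P) *\<^sub>v w" using Po w by simp
    also have "\<dots> = transpose_mat P *\<^sub>v (P *\<^sub>v w)" using PT P w by simp
    also have "\<dots> = 0\<^sub>v n" unfolding Pw by (rule eq_vecI) (use PT in auto)
    finally show ?thesis .
  qed
  have qf: "(\<Sum>i<n. es ! i * (w$i)^2) = (\<Sum>j<n. b j * (((R * P) *\<^sub>v w)$j)^2)"
    if w: "w \<in> carrier_vec n" for w
  proof -
    have Pw: "P *\<^sub>v w \<in> carrier_vec n" using P w by simp
    have APw: "A *\<^sub>v (P *\<^sub>v w) \<in> carrier_vec n" using A Pw by simp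
    have eqv: "(transpose_mat P * A * P) *\<^sub>v w = transpose_mat P *\<^sub>v (A *\<^sub>v (P *\<^sub>v w))"
      using assoc_mult_mat_vec[OF mult_carrier_mat[OF PT A] P w]
        assoc_mult_mat_vec[OF PT A mult_mat_vec_carrier[OF P w]] by simp
    have "(\<Sum>i<n. es ! i * (w$i)^2) = w \<bullet> (diagm es *\<^sub>v w)"
    proof -
      have "w \<bullet> (diagm es *\<^sub>v w) = (\<Sum>i<n. w $ i * (\<Sum>j<n. (if i = j then es ! i else 0) * w $ j))"
        using w len by (simp add: diagm_def scalar_prod_def lessThan_atLeast0)
      also have "\<dots> = (\<Sum>i<n. es ! i * (w$i)^2)"
      proof (rule sum.cong)
        fix i assume i: "i \<in> {..<n}"
        have "(\<Sum>j<n. (if i = j then es ! i else 0) * w $ j) = (\<Sum>j<n. (if i = j then 1 else 0) * (es ! i * w $ j))"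
          by (rule sum.cong) auto
        also have "\<dots> = es ! i * w $ i" using i by (simp only: delta_sum_l[of i n] lessThan_iff)
        finally show "w $ i * (\<Sum>j<n. (if i = j then es ! i else 0) * w $ j) = es ! i * (w$i)^2"
          by (simp add: power2_eq_square)
      qed simp
      finally show ?thesis by simp
    qed
    also have "\<dots> = w \<bullet> ((transpose_mat P * A * P) *\<^sub>v w)" unfolding Pd ..
    also have "\<dots> = w \<bullet> (transpose_mat P *\<^sub>v (A *\<^sub>v (P *\<^sub>v w)))" unfolding eqv ..
    also have "\<dots> = (transpose_mat P *\<^sub>v (A *\<^sub>v (P *\<^sub>v w))) \<bullet> w"
      by (rule comm_scalar_prod[OF w]) (use PT APw in simp)
    also have "\<dots> = (A *\<^sub>v (P *\<^sub>v w)) \<bullet> (P *\<^sub>v w)"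
      by (rule transpose_vec_mult_scalar[OF P w APw])
    also have "\<dots> = (P *\<^sub>v w) \<bullet> (A *\<^sub>v (P *\<^sub>v w))" by (rule comm_scalar_prod[OF APw Pw])
    also have "\<dots> = (\<Sum>j<n. b j * ((R *\<^sub>v (P *\<^sub>v w))$j)^2)" by (rule qA[OF Pw])
    also have "\<dots> = (\<Sum>j<n. b j * (((R * P) *\<^sub>v w)$j)^2)" using R P w by simp
    finally show ?thesis .
  qed
  from inertia_eq[OF RP injRP qf bnz]
  have nz: "\<forall>i<n. es ! i \<noteq> 0" and pos: "card {i. i<n \<and> es ! i > 0} = card {j. j<n \<and> b j > 0}"
    and neg: "card {i. i<n \<and> es ! i < 0} = card {j. j<n \<and> b j < 0}" by auto
  have "det (transpose_mat P * A * P) = det (transpose_mat P) * det A * det P"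
    using PT A P by (simp add: det_mult[of _ n])
  moreover have "det (diagm es) \<noteq> 0"
  proof -
    have "det (diagm es) = prod_list (diag_mat (diagm es))"
      by (rule det_upper_triangular) (auto simp: diagm_def upper_triangular_def)
    also have "diag_mat (diagm es) = es"
      by (rule nth_equalityI) (auto simp: diag_mat_def diagm_def)
    finally show ?thesis using nz len by (auto simp: prod_list_zero_iff in_set_conv_nth)
  qed
  ultimately have dA: "det A \<noteq> 0" using Pd by auto
  have inv: "invertible_mat A"
  proof -
    from det_non_zero_imp_unit[OF A dA] obtain B where B: "B \<in> carrier_mat n n" "A * B = 1\<^sub>m n" "B * A = 1\<^sub>m n"
      unfolding Units_def ring_mat_def by auto
    thus ?thesis using A unfolding invertible_mat_def inverts_mat_def square_mat.simps by auto
  qed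
  show ?thesis using inv pos neg inertia_prod_linear[OF cp] len by simp
qed

locale prime_setup =
  fixes m :: nat and p :: "nat \<Rightarrow> nat"
  assumes pr: "\<forall>i\<in>{1..m}. prime (p i)" and pinj: "inj_on p {1..m}"
begin

definition f :: "nat set \<Rightarrow> nat" where "f A = (\<Prod>i\<in>A. p i)"
definition T :: "nat set set" where "T = {A. A \<subseteq> {1..m} \<and> card A \<le> 2}"
definition hh :: "nat \<Rightarrow> real" where "hh s = (\<Prod>i\<in>{i\<in>{1..m}. p i dvd s}. (1 / real (p i) - 1))"

lemma fin: "A \<subseteq> {1..m} \<Longrightarrow> finite A" using finite_subset by blast

lemma fpos: "A \<subseteq> {1..m} \<Longrightarrow> f A > 0"
  unfolding f_def using pr by (intro prod_pos) (auto simp: prime_gt_0_nat)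

lemma fdvd: assumes A: "A \<subseteq> {1..m}" and B: "B \<subseteq> {1..m}"
  shows "f A dvd f B \<longleftrightarrow> A \<subseteq> B"
proof
  assume "A \<subseteq> B" thus "f A dvd f B" unfolding f_def by (rule prod_dvd_prod_subset[OF fin[OF B]])
next
  assume d: "f A dvd f B"
  show "A \<subseteq> B"
  proof
    fix i assume i: "i \<in> A"
    have pi: "prime (p i)" using pr i A by auto
    have "p i dvd f A" unfolding f_def using i fin[OF A] by (simp add: dvd_prodI)
    hence "p i dvd f B" using d by (rule dvd_trans)
    then obtain j where j: "j \<in> B" "p i dvd p j"
      unfolding f_def using prime_dvd_prod_iff[OF fin[OF B] pi] by blast
    have pj: "prime (p j)" using pr j B by auto
    have "p i = p j" using primes_dvd_imp_eq[OF pi pj j(2)] .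
    hence "i = j" using pinj i j A B by (auto dest: inj_onD)
    thus "i \<in> B" using j by simp
  qed
qed

lemma finj: "inj_on f (Pow {1..m})"
proof (rule inj_onI)
  fix A B assume A: "A \<in> Pow {1..m}" and B: "B \<in> Pow {1..m}" and e: "f A = f B"
  have "A \<subseteq> B" using fdvd[of A B] A B e by auto
  moreover have "B \<subseteq> A" using fdvd[of B A] A B e by auto
  ultimately show "A = B" by blast
qed

lemma fsel: assumes A: "A \<subseteq> {1..m}" shows "{i\<in>{1..m}. p i dvd f A} = A"
proof -
  have "p i dvd f A \<longleftrightarrow> i \<in> A" if "i \<in> {1..m}" for i
    using fdvd[of "{i}" A] A that by (simp add: f_def)
  thus ?thesis using A by auto
qed

lemma hh_f: assumes A: "A \<subseteq> {1..m}" shows "hh (f A) = (\<Prod>i\<in>A. (1 / real (p i) - 1))"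
  unfolding hh_def fsel[OF A] ..

lemma lcm_f: assumes A: "A \<subseteq> {1..m}" and B: "B \<subseteq> {1..m}"
  shows "real (lcm (f A) (f B)) = real (f A) * real (f B) / real (f (A \<inter> B))"
proof -
  let ?K = "A \<inter> B"
  have fA: "f A = f ?K * f (A - B)" unfolding f_def
    using prod.union_disjoint[of ?K "A - B" p] fin[OF A] by (simp add: Int_Diff_Un Un_commute) (metis Int_Diff_Un Int_Diff_disjoint finite_Diff finite_Int prod.union_disjoint)
  have fB: "f B = f ?K * f (B - A)" unfolding f_def
    by (metis Int_Diff_Un Int_Diff_disjoint Int_commute fin[OF B] finite_Diff finite_Int prod.union_disjoint)
  have cop: "coprime (f (A - B)) (f (B - A))"
    unfolding f_def
  proof (intro prod_coprime_left prod_coprime_right)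
    fix i j assume i: "i \<in> A - B" and j: "j \<in> B - A"
    have pi: "prime (p i)" and pj: "prime (p j)" using pr i j A B by auto
    have "i \<noteq> j" using i j by auto
    hence "p i \<noteq> p j" using pinj i j A B by (auto dest: inj_onD)
    thus "coprime (p i) (p j)" using primes_coprime[OF pi pj] by simp
  qed
  have g: "gcd (f A) (f B) = f ?K"
    unfolding fA fB gcd_mult_distrib_nat[symmetric] using cop by simp
  have K0: "f ?K > 0" using fpos[of ?K] A by auto
  have "f A * f B = gcd (f A) (f B) * lcm (f A) (f B)" by (rule prod_gcd_lcm_nat)
  hence "real (f A) * real (f B) = real (f ?K) * real (lcm (f A) (f B))"
    unfolding g by (metis of_nat_mult)
  thus ?thesis using K0 by (simp add: field_simps)
qed


lemma subset_sum: assumes K: "K \<subseteq> {1..m}"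
  shows "(\<Sum>C\<in>Pow K. \<Prod>i\<in>C. (1 / real (p i) - 1)) = 1 / real (f K)"
proof -
  have "(\<Prod>i\<in>K. (1 / real (p i) - 1) + 1) = (\<Sum>C\<in>Pow K. (\<Prod>i\<in>C. (1 / real (p i) - 1)) * (\<Prod>i\<in>K - C. 1))"
    by (rule prod_add[OF fin[OF K]])
  hence "(\<Sum>C\<in>Pow K. \<Prod>i\<in>C. (1 / real (p i) - 1)) = (\<Prod>i\<in>K. 1 / real (p i))" by simp
  also have "\<dots> = 1 / real (f K)" unfolding f_def of_nat_prod by (simp add: prod_dividef)
  finally show ?thesis .
qed

lemma KI_sets: assumes A: "A \<subseteq> {1..m}" and B: "B \<subseteq> {1..m}"
  shows "real (lcm (f A) (f B)) = real (f A) * real (f B) * (\<Sum>C\<in>Pow (A \<inter> B). \<Prod>i\<in>C. (1 / real (p i) - 1))"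
proof -
  have K: "A \<inter> B \<subseteq> {1..m}" using A by auto
  show ?thesis unfolding lcm_f[OF A B] subset_sum[OF K] by simp
qed

lemma TPow: "A \<in> T \<Longrightarrow> A \<subseteq> {1..m}" unfolding T_def by auto

lemma KI: assumes s: "s \<in> f ` T" and t: "t \<in> f ` T"
  shows "real (lcm s t) = real s * real t * (\<Sum>d\<in>{d\<in>f ` T. d dvd s \<and> d dvd t}. hh d)"
proof -
  obtain A where A: "A \<in> T" "s = f A" using s by blast
  obtain B where B: "B \<in> T" "t = f B" using t by blast
  have A1: "A \<subseteq> {1..m}" and B1: "B \<subseteq> {1..m}" using A B TPow by auto
  have cA: "card A \<le> 2" using A unfolding T_def by auto
  have eq: "{d\<in>f ` T. d dvd s \<and> d dvd t} = f ` Pow (A \<inter> B)"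
  proof
    show "{d\<in>f ` T. d dvd s \<and> d dvd t} \<subseteq> f ` Pow (A \<inter> B)"
    proof
      fix d assume "d \<in> {d\<in>f ` T. d dvd s \<and> d dvd t}"
      then obtain C where C: "C \<in> T" "d = f C" "f C dvd f A" "f C dvd f B" using A B by auto
      have "C \<subseteq> A" "C \<subseteq> B" using C fdvd[OF TPow[OF C(1)] A1] fdvd[OF TPow[OF C(1)] B1] by auto
      thus "d \<in> f ` Pow (A \<inter> B)" using C by auto
    qed
    show "f ` Pow (A \<inter> B) \<subseteq> {d\<in>f ` T. d dvd s \<and> d dvd t}"
    proof
      fix d assume "d \<in> f ` Pow (A \<inter> B)"
      then obtain C where C: "C \<subseteq> A \<inter> B" "d = f C" by auto
      have "card C \<le> card A" using C(1) fin[OF A1] by (intro card_mono) auto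
      hence CT: "C \<in> T" using C(1) cA A1 unfolding T_def by auto
      have "f C dvd f A" "f C dvd f B" using C(1) fdvd[OF TPow[OF CT] A1] fdvd[OF TPow[OF CT] B1] by auto
      thus "d \<in> {d\<in>f ` T. d dvd s \<and> d dvd t}" using C CT A B by auto
    qed
  qed
  have inj: "inj_on f (Pow (A \<inter> B))" using finj by (rule inj_on_subset) (use A1 in auto)
  have "(\<Sum>d\<in>{d\<in>f ` T. d dvd s \<and> d dvd t}. hh d) = (\<Sum>C\<in>Pow (A \<inter> B). hh (f C))"
    unfolding eq sum.reindex[OF inj] o_def ..
  also have "\<dots> = (\<Sum>C\<in>Pow (A \<inter> B). \<Prod>i\<in>C. (1 / real (p i) - 1))"
    by (rule sum.cong) (use A1 in \<open>auto intro!: hh_f\<close>)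
  finally show ?thesis using KI_sets[OF A1 B1] A B by simp
qed

lemma S_eq: "{1} \<union> p ` {1..m} \<union> {p i * p j | i j. 1 \<le> i \<and> i < j \<and> j \<le> m} = f ` T"
proof
  show "{1} \<union> p ` {1..m} \<union> {p i * p j | i j. 1 \<le> i \<and> i < j \<and> j \<le> m} \<subseteq> f ` T"
  proof (intro Un_least subsetI)
    fix x assume "x \<in> {1::nat}"
    hence "x = f {}" by (simp add: f_def)
    moreover have "{} \<in> T" unfolding T_def by simp
    ultimately show "x \<in> f ` T" by blast
  next
    fix x assume "x \<in> p ` {1..m}"
    then obtain i where i: "i \<in> {1..m}" "x = p i" by blast
    hence "x = f {i}" by (simp add: f_def)
    moreover have "{i} \<in> T" unfolding T_def using i by simp
    ultimately show "x \<in> f ` T" by blast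
  next
    fix x assume "x \<in> {p i * p j | i j. 1 \<le> i \<and> i < j \<and> j \<le> m}"
    then obtain i j where ij: "1 \<le> i" "i < j" "j \<le> m" "x = p i * p j" by blast
    hence "x = f {i, j}" by (simp add: f_def)
    moreover have "{i, j} \<in> T" unfolding T_def using ij by simp
    ultimately show "x \<in> f ` T" by blast
  qed
  show "f ` T \<subseteq> {1} \<union> p ` {1..m} \<union> {p i * p j | i j. 1 \<le> i \<and> i < j \<and> j \<le> m}"
  proof
    fix x assume "x \<in> f ` T"
    then obtain A where A: "A \<in> T" "x = f A" by blast
    have A1: "A \<subseteq> {1..m}" and c: "card A \<le> 2" using A unfolding T_def by auto
    have "card A = 0 \<or> card A = 1 \<or> card A = 2" using c by linarith
    thus "x \<in> {1} \<union> p ` {1..m} \<union> {p i * p j | i j. 1 \<le> i \<and> i < j \<and> j \<le> m}"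
    proof (elim disjE)
      assume "card A = 0"
      hence "A = {}" using fin[OF A1] by simp
      thus ?thesis using A by (simp add: f_def)
    next
      assume "card A = 1"
      then obtain i where "A = {i}" by (auto simp: card_1_singleton_iff)
      thus ?thesis using A A1 by (simp add: f_def)
    next
      assume "card A = 2"
      then obtain i j where ij: "A = {i, j}" "i \<noteq> j" by (auto simp: card_2_iff)
      show ?thesis
      proof (cases "i < j")
        case True
        hence "x = p i * p j" using A ij by (simp add: f_def)
        thus ?thesis using True ij A1 by auto
      next
        case False
        hence "j < i" using ij by simp
        moreover have "x = p j * p i" using A ij by (simp add: f_def mult.commute)
        ultimately show ?thesis using ij A1 by auto
      qed
    qed
  qed
qed


lemma neg_prod_sign:
  fixes x :: "nat \<Rightarrow> real"
  assumes "finite A" "\<forall>i\<in>A. x i < 0"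
  shows "(even (card A) \<longrightarrow> prod x A > 0) \<and> (odd (card A) \<longrightarrow> prod x A < 0)"
  using assms
proof (induction A rule: finite_induct)
  case empty thus ?case by simp
next
  case (insert a F)
  have xa: "x a < 0" using insert by simp
  have IH: "(even (card F) \<longrightarrow> prod x F > 0) \<and> (odd (card F) \<longrightarrow> prod x F < 0)" using insert by simp
  show ?case using insert(1,2) IH xa by (auto simp: mult_neg_neg mult_neg_pos mult_pos_neg)
qed

lemma hh_sign: assumes A: "A \<subseteq> {1..m}"
  shows "(even (card A) \<longrightarrow> hh (f A) > 0) \<and> (odd (card A) \<longrightarrow> hh (f A) < 0)"
proof -
  have "\<forall>i\<in>A. 1 / real (p i) - 1 < 0"
  proof
    fix i assume "i \<in> A"
    hence "prime (p i)" using pr A by auto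
    hence "p i \<ge> 2" by (rule prime_ge_2_nat)
    hence "1 / real (p i) < 1" by simp
    thus "1 / real (p i) - 1 < 0" by simp
  qed
  from neg_prod_sign[OF fin[OF A] this] show ?thesis unfolding hh_f[OF A] .
qed

lemma card_Tk: "card {A. A \<subseteq> {1..m} \<and> card A = k} = m choose k"
  using n_subsets[of "{1..m}" k] by simp

lemma T_split: "T = {A. A \<subseteq> {1..m} \<and> card A = 0} \<union> {A. A \<subseteq> {1..m} \<and> card A = 1} \<union> {A. A \<subseteq> {1..m} \<and> card A = 2}"
  unfolding T_def by auto

lemma finT: "finite T" unfolding T_def by (rule finite_subset[of _ "Pow {1..m}"]) auto

lemma card_T: "card T = 1 + m + (m choose 2)"
proof -
  have "card T = card {A. A \<subseteq> {1..m} \<and> card A = 0} + card {A. A \<subseteq> {1..m} \<and> card A = 1} + card {A. A \<subseteq> {1..m} \<and> card A = 2}"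
    unfolding T_split
    by (subst card_Un_disjoint, force simp: T_def, force, force, subst card_Un_disjoint) auto
  thus ?thesis unfolding card_Tk by simp
qed

lemma card_T_pos: "card {A \<in> T. hh (f A) > 0} = 1 + (m choose 2)"
proof -
  have "{A \<in> T. hh (f A) > 0} = {A. A \<subseteq> {1..m} \<and> card A = 0} \<union> {A. A \<subseteq> {1..m} \<and> card A = 2}"
  proof -
    have "hh (f A) > 0 \<longleftrightarrow> card A = 0 \<or> card A = 2" if "A \<in> T" for A
    proof -
      have A1: "A \<subseteq> {1..m}" and c: "card A \<le> 2" using that unfolding T_def by auto
      have "card A = 0 \<or> card A = 1 \<or> card A = 2" using c by linarith
      thus ?thesis using hh_sign[OF A1] by auto
    qed
    thus ?thesis unfolding T_def by auto
  qed
  also have "card \<dots> = card {A. A \<subseteq> {1..m} \<and> card A = 0} + card {A. A \<subseteq> {1..m} \<and> card A = 2}"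
    by (rule card_Un_disjoint) auto
  also have "\<dots> = 1 + (m choose 2)" unfolding card_Tk by simp
  finally show ?thesis .
qed

lemma card_T_neg: "card {A \<in> T. hh (f A) < 0} = m"
proof -
  have "{A \<in> T. hh (f A) < 0} = {A. A \<subseteq> {1..m} \<and> card A = 1}"
  proof -
    have "hh (f A) < 0 \<longleftrightarrow> card A = 1" if "A \<in> T" for A
    proof -
      have A1: "A \<subseteq> {1..m}" and c: "card A \<le> 2" using that unfolding T_def by auto
      have "card A = 0 \<or> card A = 1 \<or> card A = 2" using c by linarith
      thus ?thesis using hh_sign[OF A1] by auto
    qed
    thus ?thesis unfolding T_def by auto
  qed
  thus ?thesis using card_Tk[of 1] by simp
qed

lemma hh_nz: "s \<in> f ` T \<Longrightarrow> hh s \<noteq> 0"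
proof -
  assume "s \<in> f ` T"
  then obtain A where A: "A \<in> T" "s = f A" by blast
  have "even (card A) \<or> odd (card A)" by simp
  thus "hh s \<noteq> 0" using hh_sign[OF TPow[OF A(1)]] A(2) by auto
qed

lemma card_fT_pred: "card {s \<in> f ` T. P s} = card {A \<in> T. P (f A)}"
proof -
  have "{s \<in> f ` T. P s} = f ` {A \<in> T. P (f A)}" by auto
  moreover have "inj_on f {A \<in> T. P (f A)}" by (rule inj_on_subset[OF finj]) (auto simp: T_def)
  ultimately show ?thesis by (simp add: card_image)
qed

end

lemma sum_nth_reindex:
  assumes "distinct xs"
  shows "(\<Sum>k\<in>{k. k < length xs \<and> P (xs ! k)}. g (xs ! k)) = (\<Sum>d\<in>{d\<in>set xs. P d}. g d)"
proof -
  have inj: "inj_on ((!) xs) {k. k < length xs \<and> P (xs ! k)}"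
    using inj_on_nth[OF assms, of "{k. k < length xs \<and> P (xs ! k)}"] by auto
  have "{d\<in>set xs. P d} = (!) xs ` {k. k < length xs \<and> P (xs ! k)}"
    by (auto simp: in_set_conv_nth)
  thus ?thesis using sum.reindex[OF inj, of g] by (simp add: o_def)
qed

lemma card_nth_reindex:
  assumes "distinct xs"
  shows "card {k. k < length xs \<and> P (xs ! k)} = card {d\<in>set xs. P d}"
proof -
  have inj: "inj_on ((!) xs) {k. k < length xs \<and> P (xs ! k)}"
    using inj_on_nth[OF assms, of "{k. k < length xs \<and> P (xs ! k)}"] by auto
  have "{d\<in>set xs. P d} = (!) xs ` {k. k < length xs \<and> P (xs ! k)}"
    by (auto simp: in_set_conv_nth)
  thus ?thesis using card_image[OF inj] by simp
qed

context prime_setup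
begin

lemma main_part:
  fixes S :: "nat set"
  assumes S: "S = f ` T"
  shows "invertible_mat (lcm_matrix S) \<and> pos_inertia (lcm_matrix S) = 1 + (m choose 2)
     \<and> neg_inertia (lcm_matrix S) = m \<and> card S = 1 + m + (m choose 2)"
proof -
  define xs where "xs = sorted_list_of_set S"
  define n where "n = length xs"
  have finS: "finite S" unfolding S using finT by simp
  have dist: "distinct xs" and setxs: "set xs = S" and sorted: "sorted_wrt (<) xs"
    unfolding xs_def using finS by (auto intro: strict_sorted_list_of_set)
  have cardS: "card S = card T" unfolding S
    by (rule card_image, rule inj_on_subset[OF finj]) (auto simp: T_def)
  have nS: "n = card S" unfolding n_def using dist setxs distinct_card by metis
  have xin: "xs ! k \<in> S" if "k < n" for k using that setxs unfolding n_def by auto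
  have xpos: "xs ! k > 0" if k: "k < n" for k
  proof -
    obtain A where "A \<in> T" "xs ! k = f A" using xin[OF k] S by blast
    thus ?thesis using fpos TPow by auto
  qed
  define A where "A = lcm_matrix S"
  have A_eq: "A = mat n n (\<lambda>(i,j). real (lcm (xs ! i) (xs ! j)))"
    unfolding A_def lcm_matrix_def Let_def xs_def[symmetric] n_def ..
  have Ac: "A \<in> carrier_mat n n" unfolding A_eq by simp
  have Asym: "A $$ (i,j) = A $$ (j,i)" if "i < n" "j < n" for i j
    unfolding A_eq using that by (simp add: lcm.commute)
  define Rf where "Rf = (\<lambda>k i. if xs ! k dvd xs ! i then real (xs ! i) else 0)"
  define R where "R = mat n n (\<lambda>(k,i). Rf k i)"
  have Rc: "R \<in> carrier_mat n n" unfolding R_def by simp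
  define b where "b = (\<lambda>k. hh (xs ! k))"
  have bnz: "b k \<noteq> 0" if "k < n" for k unfolding b_def using hh_nz xin[OF that] S by blast
  have ut: "upper_triangular R" unfolding upper_triangular_def
  proof (intro allI impI)
    fix k i assume k: "k < dim_row R" and ik: "i < k"
    have kn: "k < n" using k Rc by simp
    have lt: "xs ! i < xs ! k" using sorted_wrt_nth_less[OF sorted ik] kn unfolding n_def by simp
    have "\<not> xs ! k dvd xs ! i"
    proof
      assume "xs ! k dvd xs ! i"
      hence "xs ! k \<le> xs ! i" using xpos[of i] ik kn by (intro dvd_imp_le) auto
      thus False using lt by simp
    qed
    thus "R $$ (k,i) = 0" using kn ik unfolding R_def Rf_def by simp
  qed
  have "det R = prod_list (diag_mat R)" by (rule det_upper_triangular[OF ut Rc])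
  also have "\<dots> \<noteq> 0"
  proof -
    have "0 \<notin> set (diag_mat R)"
    proof
      assume "0 \<in> set (diag_mat R)"
      then obtain k where k: "k < n" "R $$ (k,k) = 0" using Rc by (auto simp: diag_mat_def)
      thus False using xpos[OF k(1)] unfolding R_def Rf_def by simp
    qed
    thus ?thesis by (simp add: prod_list_zero_iff)
  qed
  finally have detR: "det R \<noteq> 0" .
  have injR: "u = 0\<^sub>v n" if "u \<in> carrier_vec n" "R *\<^sub>v u = 0\<^sub>v n" for u
    using det_0_iff_vec_prod_zero_field[OF Rc] detR that by blast
  have entry: "real (lcm (xs ! i) (xs ! j)) = (\<Sum>k<n. b k * Rf k i * Rf k j)" if ij: "i < n" "j < n" for i j
  proof -
    have "(\<Sum>k<n. b k * Rf k i * Rf k j) = (\<Sum>k<n. if xs ! k dvd xs ! i \<and> xs ! k dvd xs ! j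
        then real (xs ! i) * real (xs ! j) * hh (xs ! k) else 0)"
      by (rule sum.cong) (auto simp: b_def Rf_def)
    also have "\<dots> = (\<Sum>k\<in>{k. k < n \<and> (xs ! k dvd xs ! i \<and> xs ! k dvd xs ! j)}. real (xs ! i) * real (xs ! j) * hh (xs ! k))"
      by (subst sum.inter_filter[symmetric]) (auto simp: lessThan_def)
    also have "\<dots> = real (xs ! i) * real (xs ! j) * (\<Sum>k\<in>{k. k < length xs \<and> (xs ! k dvd xs ! i \<and> xs ! k dvd xs ! j)}. hh (xs ! k))"
      by (simp add: sum_distrib_left n_def)
    also have "(\<Sum>k\<in>{k. k < length xs \<and> (xs ! k dvd xs ! i \<and> xs ! k dvd xs ! j)}. hh (xs ! k))
       = (\<Sum>d\<in>{d\<in>set xs. d dvd xs ! i \<and> d dvd xs ! j}. hh d)"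
      by (rule sum_nth_reindex[OF dist])
    also have "\<dots> = (\<Sum>d\<in>{d\<in>f ` T. d dvd xs ! i \<and> d dvd xs ! j}. hh d)" unfolding setxs S ..
    finally show ?thesis using KI[of "xs ! i" "xs ! j"] xin[OF ij(1)] xin[OF ij(2)] S by simp
  qed
  have qA: "y \<bullet> (A *\<^sub>v y) = (\<Sum>k<n. b k * ((R *\<^sub>v y)$k)^2)" if y: "y \<in> carrier_vec n" for y
  proof -
    have Ry: "(R *\<^sub>v y)$k = (\<Sum>i<n. Rf k i * y$i)" if "k < n" for k
      using that y unfolding R_def by (simp add: scalar_prod_def lessThan_atLeast0)
    have "(\<Sum>k<n. b k * ((R *\<^sub>v y)$k)^2) = (\<Sum>k<n. b k * ((\<Sum>i<n. Rf k i * y$i) * (\<Sum>j<n. Rf k j * y$j)))"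
      by (rule sum.cong) (auto simp: Ry power2_eq_square)
    also have "\<dots> = (\<Sum>k<n. \<Sum>i<n. \<Sum>j<n. b k * Rf k i * Rf k j * y$i * y$j)"
      by (simp add: sum_product sum_distrib_left mult_ac)
    also have "\<dots> = (\<Sum>i<n. \<Sum>k<n. \<Sum>j<n. b k * Rf k i * Rf k j * y$i * y$j)" by (rule sum.swap)
    also have "\<dots> = (\<Sum>i<n. \<Sum>j<n. \<Sum>k<n. b k * Rf k i * Rf k j * y$i * y$j)"
      by (rule sum.cong, simp, rule sum.swap)
    also have "\<dots> = (\<Sum>i<n. \<Sum>j<n. y$i * (real (lcm (xs ! i) (xs ! j)) * y$j))"
    proof (rule sum.cong, simp, rule sum.cong, simp)
      fix i j assume i: "i \<in> {..<n}" and j: "j \<in> {..<n}"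
      have "(\<Sum>k<n. b k * Rf k i * Rf k j * y$i * y$j) = (\<Sum>k<n. b k * Rf k i * Rf k j) * (y$i * y$j)"
        unfolding sum_distrib_right by (rule sum.cong) (simp_all add: mult_ac)
      also have "\<dots> = y$i * (real (lcm (xs ! i) (xs ! j)) * y$j)" using entry[of i j] i j by simp
      finally show "(\<Sum>k<n. b k * Rf k i * Rf k j * y$i * y$j) = y$i * (real (lcm (xs ! i) (xs ! j)) * y$j)" .
    qed
    also have "\<dots> = y \<bullet> (A *\<^sub>v y)"
      using y Ac unfolding A_eq by (simp add: scalar_prod_def lessThan_atLeast0 sum_distrib_left)
    finally show ?thesis by simp
  qed
  note r = sym_inertia[OF Ac Asym Rc injR qA bnz]
  have res1: "invertible_mat A" using r by (rule conjunct1)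
  have res2: "pos_inertia A = card {j. j < n \<and> b j > 0}" using r[THEN conjunct2] by (rule conjunct1)
  have res3: "neg_inertia A = card {j. j < n \<and> b j < 0}" using r[THEN conjunct2] by (rule conjunct2)
  have cpos: "card {j. j < n \<and> b j > 0} = 1 + (m choose 2)"
  proof -
    have "card {j. j < n \<and> b j > 0} = card {d\<in>set xs. hh d > 0}"
      unfolding b_def n_def by (rule card_nth_reindex[OF dist])
    also have "\<dots> = card {A \<in> T. hh (f A) > 0}" unfolding setxs S by (rule card_fT_pred)
    finally show ?thesis using card_T_pos by simp
  qed
  have cneg: "card {j. j < n \<and> b j < 0} = m"
  proof -
    have "card {j. j < n \<and> b j < 0} = card {d\<in>set xs. hh d < 0}"
      unfolding b_def n_def by (rule card_nth_reindex[OF dist])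
    also have "\<dots> = card {A \<in> T. hh (f A) < 0}" unfolding setxs S by (rule card_fT_pred)
    finally show ?thesis using card_T_neg by simp
  qed
  have c4: "card S = 1 + m + (m choose 2)" using cardS card_T by simp
  show ?thesis using res1 res2 res3 cpos cneg c4 unfolding A_def by (intro conjI) simp_all
qed

end

theorem mainTheorem16:
  fixes m :: nat and p :: "nat \<Rightarrow> nat" and S :: "nat set"
  assumes "m \<ge> 1"
    and "\<forall>i\<in>{1..m}. prime (p i)"
    and "inj_on p {1..m}"
    and "S = {1} \<union> p ` {1..m} \<union> {p i * p j | i j. 1 \<le> i \<and> i < j \<and> j \<le> m}"
  shows "2 * card S = m^2 + m + 2
    \<and> invertible_mat (lcm_matrix S)
    \<and> neg_inertia (lcm_matrix S) = m
    \<and> pos_inertia (lcm_matrix S) = 1 + (m choose 2)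
    \<and> 2 * pos_inertia (lcm_matrix S) = m^2 - m + 2"
proof -
  interpret prime_setup m p using assms(2,3) by unfold_locales
  have S: "S = f ` T" using assms(4) S_eq by simp
  note r = main_part[OF S]
  have e: "2 * (m choose 2) + m = m * m"
    by (induction m) (simp_all add: numeral_2_eq_2 algebra_simps)
  have c: "card S = 1 + m + (m choose 2)" using r by simp
  have pos: "pos_inertia (lcm_matrix S) = 1 + (m choose 2)" using r by simp
  have "2 * card S = m^2 + m + 2" unfolding c power2_eq_square e[symmetric] by simp
  moreover have "2 * pos_inertia (lcm_matrix S) = m^2 - m + 2"
    unfolding pos power2_eq_square e[symmetric] by simp
  ultimately show ?thesis using r by simp
qed

end
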